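(* For every instance of continuous BGT, every schedule $S$, and every nonempty subset $V'\subseteq V$ of the points, $\mathrm{MH}(S)\ge h_{\min}(V')\cdot \mathrm{MST}(V')$.
   Context: Continuous BGT: bamboos $b_1,\dots,b_n$ located at points $V=\{v_1,\dots,v_n\}$, growth rates $h_1\ge\dots\ge h_n>0$, initial heights $0$; symmetric travel times $t_{i,j}>0$ ($i\ne j$) satisfying the triangle inequality. A robot starts at $v_1$ at time $0$, moves between points taking time $t_{i,j}$ from $v_i$ to $v_j$, and cuts the bamboo at each point it is at, instantaneously, to height $0$. Height of $b_i$ at time $t$ = $h_i$ times the time since its last cut (or since $0$). $\mathrm{MH}(S)$ = supremum of heights over all times. For $V'\subseteq V$, $h_{\min}(V')$ is the minimum growth rate of a bamboo located in $V'$, and $\mathrm{MST}(V')$ is the minimum total weight of a spanning tree on $V'$ with edge weights $t_{i,j}$ ($0$ if $|V'|=1$). *)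

theory Defs
  imports "HOL-Analysis.Analysis"
begin

text \<open>Continuous BGT. Points are indexed 0,...,n-1 (point i corresponds to v_(i+1)).
  h i : growth rate of bamboo at point i; tt i j : travel time between points i and j.\<close>

definition bgt_instance :: "nat \<Rightarrow> (nat \<Rightarrow> real) \<Rightarrow> (nat \<Rightarrow> nat \<Rightarrow> real) \<Rightarrow> bool" where
  "bgt_instance n h tt \<longleftrightarrow>
     n \<ge> 1 \<and>
     (\<forall>i<n. \<forall>j<n. i \<le> j \<longrightarrow> h i \<ge> h j) \<and>
     (\<forall>i<n. h i > 0) \<and>
     (\<forall>i<n. \<forall>j<n. i \<noteq> j \<longrightarrow> tt i j > 0 \<and> tt i j = tt j i) \<and>
     (\<forall>i<n. \<forall>j<n. \<forall>k<n. i \<noteq> j \<and> j \<noteq> k \<and> i \<noteq> k \<longrightarrow> tt i k \<le> tt i j + tt j k)"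

definition schedule :: "nat \<Rightarrow> (nat \<Rightarrow> nat) \<Rightarrow> bool" where
  "schedule n p \<longleftrightarrow> p 0 = 0 \<and> (\<forall>k. p k < n \<and> p (Suc k) \<noteq> p k)"

definition arrival :: "(nat \<Rightarrow> nat \<Rightarrow> real) \<Rightarrow> (nat \<Rightarrow> nat) \<Rightarrow> nat \<Rightarrow> real" where
  "arrival tt p k = (\<Sum>j<k. tt (p j) (p (Suc j)))"

definition last_cut :: "(nat \<Rightarrow> nat \<Rightarrow> real) \<Rightarrow> (nat \<Rightarrow> nat) \<Rightarrow> nat \<Rightarrow> real \<Rightarrow> real" where
  "last_cut tt p i \<tau> = Sup ({arrival tt p k | k. arrival tt p k \<le> \<tau> \<and> p k = i} \<union> {0})"

definition height :: "(nat \<Rightarrow> real) \<Rightarrow> (nat \<Rightarrow> nat \<Rightarrow> real) \<Rightarrow> (nat \<Rightarrow> nat) \<Rightarrow> nat \<Rightarrow> real \<Rightarrow> real" where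
  "height h tt p i \<tau> = h i * (\<tau> - last_cut tt p i \<tau>)"

definition MH :: "nat \<Rightarrow> (nat \<Rightarrow> real) \<Rightarrow> (nat \<Rightarrow> nat \<Rightarrow> real) \<Rightarrow> (nat \<Rightarrow> nat) \<Rightarrow> ereal" where
  "MH n h tt p = (SUP \<tau>\<in>{0::real..}. SUP i\<in>{..<n}. ereal (height h tt p i \<tau>))"

definition spanning_tree :: "nat set \<Rightarrow> (nat \<times> nat) set \<Rightarrow> bool" where
  "spanning_tree W E \<longleftrightarrow>
     E \<subseteq> {(a,b). a \<in> W \<and> b \<in> W \<and> a < b} \<and>
     card E = card W - 1 \<and>
     (\<forall>a\<in>W. \<forall>b\<in>W. (a,b) \<in> (E \<union> E\<inverse>)\<^sup>*)"

definition MST :: "(nat \<Rightarrow> nat \<Rightarrow> real) \<Rightarrow> nat set \<Rightarrow> real" where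
  "MST tt W = Min {(\<Sum>(a,b)\<in>E. tt a b) | E. spanning_tree W E}"

definition h_min :: "(nat \<Rightarrow> real) \<Rightarrow> nat set \<Rightarrow> real" where
  "h_min h W = Min (h ` W)"

end

theory Submission
  imports Defs
begin

lemma path_le:
  fixes tt :: "nat \<Rightarrow> nat \<Rightarrow> real" and p :: "nat \<Rightarrow> nat"
  assumes hp: "\<forall>j. p j < n \<and> p (Suc j) \<noteq> p j"
    and htt: "\<forall>i<n. \<forall>j<n. i \<noteq> j \<longrightarrow> tt i j > 0 \<and> tt i j = tt j i"
    and htri: "\<forall>i<n. \<forall>j<n. \<forall>k<n. i \<noteq> j \<and> j \<noteq> k \<and> i \<noteq> k \<longrightarrow> tt i k \<le> tt i j + tt j k"
  shows "c = a + Suc d \<Longrightarrow> p a \<noteq> p c \<Longrightarrow> tt (p a) (p c) \<le> (\<Sum>j\<in>{a..<c}. tt (p j) (p (Suc j)))"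
proof (induction d arbitrary: a)
  case 0
  then show ?case by simp
next
  case (Suc d)
  have split: "(\<Sum>j\<in>{a..<c}. tt (p j) (p (Suc j))) = tt (p a) (p (Suc a)) + (\<Sum>j\<in>{Suc a..<c}. tt (p j) (p (Suc j)))"
    using Suc.prems by (simp add: sum.atLeast_Suc_lessThan)
  have nn: "(\<Sum>j\<in>{Suc a..<c}. tt (p j) (p (Suc j))) \<ge> 0"
  proof (rule sum_nonneg)
    fix j
    have "p j < n" "p (Suc j) < n" "p j \<noteq> p (Suc j)"
      by (rule conjunct1[OF spec[OF hp]], rule conjunct1[OF spec[OF hp]], rule not_sym[OF conjunct2[OF spec[OF hp]]])
    then show "0 \<le> tt (p j) (p (Suc j))" using htt[rule_format, of "p j" "p (Suc j)"] by simp
  qed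
  show ?case
  proof (cases "p (Suc a) = p c")
    case True
    then show ?thesis using split nn by simp
  next
    case False
    have IH: "tt (p (Suc a)) (p c) \<le> (\<Sum>j\<in>{Suc a..<c}. tt (p j) (p (Suc j)))"
      using Suc.IH[of "Suc a"] Suc.prems False by simp
    have "tt (p a) (p c) \<le> tt (p a) (p (Suc a)) + tt (p (Suc a)) (p c)"
    proof -
      have "p a < n" "p (Suc a) < n" "p c < n" "p a \<noteq> p (Suc a)"
        by (rule conjunct1[OF spec[OF hp]], rule conjunct1[OF spec[OF hp]], rule conjunct1[OF spec[OF hp]], rule not_sym[OF conjunct2[OF spec[OF hp]]])
      then show ?thesis using htri[rule_format, of "p a" "p (Suc a)" "p c"] Suc.prems False by simp
    qed
    then show ?thesis using IH split by linarith
  qed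
qed

lemma tree_ex:
  fixes tt :: "nat \<Rightarrow> nat \<Rightarrow> real" and p :: "nat \<Rightarrow> nat"
  assumes hp: "\<forall>j. p j < n \<and> p (Suc j) \<noteq> p j"
    and htt: "\<forall>i<n. \<forall>j<n. i \<noteq> j \<longrightarrow> tt i j > 0 \<and> tt i j = tt j i"
    and htri: "\<forall>i<n. \<forall>j<n. \<forall>k<n. i \<noteq> j \<and> j \<noteq> k \<and> i \<noteq> k \<longrightarrow> tt i k \<le> tt i j + tt j k"
  shows "b = a + d \<Longrightarrow> W \<subseteq> p ` {a..b} \<Longrightarrow> W \<noteq> {} \<Longrightarrow>
     \<exists>E. spanning_tree W E \<and> (\<Sum>(x,y)\<in>E. tt x y) \<le> (\<Sum>j\<in>{a..<b}. tt (p j) (p (Suc j)))"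
proof (induction d arbitrary: a W rule: less_induct)
  case (less d)
  define S where "S a b = (\<Sum>j\<in>{a..<b}. tt (p j) (p (Suc j)))" for a b
  have Snn: "S x y \<ge> 0" for x y unfolding S_def
  proof (rule sum_nonneg)
    fix j
    have "p j < n" "p (Suc j) < n" "p j \<noteq> p (Suc j)"
      by (rule conjunct1[OF spec[OF hp]], rule conjunct1[OF spec[OF hp]], rule not_sym[OF conjunct2[OF spec[OF hp]]])
    then show "0 \<le> tt (p j) (p (Suc j))" using htt[rule_format, of "p j" "p (Suc j)"] by simp
  qed
  have Ssplit: "x \<le> y \<Longrightarrow> y \<le> z \<Longrightarrow> S x z = S x y + S y z" for x y z
    unfolding S_def by (simp add: sum.atLeastLessThan_concat)
  have single: "spanning_tree {v} {}" for v
    unfolding spanning_tree_def by simp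
  show ?case
  proof (cases "a < b \<and> W \<subseteq> p ` {Suc a..b}")
    case True
    obtain E where E: "spanning_tree W E" "(\<Sum>(x,y)\<in>E. tt x y) \<le> S (Suc a) b"
    proof -
      have d1: "d - 1 < d" "b = Suc a + (d - 1)" using less.prems True by auto
      have "W \<subseteq> p ` {Suc a..b}" using True by blast
      from less.IH[OF d1 this less.prems(3)] show ?thesis using that unfolding S_def by blast
    qed
    have "S a b = S a (Suc a) + S (Suc a) b" using True by (intro Ssplit) auto
    then show ?thesis using E Snn[of a "Suc a"] unfolding S_def by fastforce
  next
    case False
    have ins: "p ` {a..b} = insert (p a) (p ` {Suc a..b})" if "a \<le> b"
      proof -
        have "{a..b} = insert a {Suc a..b}" using that by auto
        then show ?thesis by simp
      qed
    have pa0: "p a \<in> W \<and> (p a \<notin> p ` {Suc a..b} \<or> a = b)"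
      proof (cases "a = b")
        case True
        then show ?thesis using less.prems by auto
      next
        case ne: False
        then have "a < b" using less.prems by simp
        then have nsub: "\<not> W \<subseteq> p ` {Suc a..b}" using False by simp
        then show ?thesis using less.prems ins[of] \<open>a < b\<close> by (auto simp del: atLeastAtMost_iff)
      qed
    then have pa: "p a \<in> W" "p a \<notin> p ` {Suc a..b} \<or> a = b" by auto
    define W' where "W' = W - {p a}"
    show ?thesis
    proof (cases "W' = {}")
      case True
      then have "W = {p a}" using pa unfolding W'_def by auto
      then show ?thesis using single Snn[of a b] unfolding S_def by force
    next
      case W'ne: False
      have ab: "a < b" using W'ne less.prems unfolding W'_def by (cases "a < b") auto
      have W'sub: "W' \<subseteq> p ` {Suc a..b}"
        using less.prems ins ab unfolding W'_def by auto
      define c where "c = (LEAST j. Suc a \<le> j \<and> j \<le> b \<and> p j \<in> W')"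
      obtain w where w: "w \<in> W'" using W'ne by auto
      then obtain j0 where j0: "Suc a \<le> j0" "j0 \<le> b" "p j0 \<in> W'"
      proof -
        have "w \<in> p ` {Suc a..b}" using W'sub w by blast
        then obtain j where j: "j \<in> {Suc a..b}" "w = p j" by (rule imageE) simp
        then show ?thesis using w by (intro that[of j]) simp_all
      qed
      have c: "Suc a \<le> c" "c \<le> b" "p c \<in> W'"
        using LeastI[of "\<lambda>j. Suc a \<le> j \<and> j \<le> b \<and> p j \<in> W'" j0] j0 unfolding c_def by auto
      have cmin: "\<And>j. Suc a \<le> j \<Longrightarrow> j \<le> b \<Longrightarrow> p j \<in> W' \<Longrightarrow> c \<le> j"
        unfolding c_def by (rule Least_le) (intro conjI)
      have W'sub2: "W' \<subseteq> p ` {c..b}"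
      proof
        fix x assume "x \<in> W'"
        then have "x \<in> p ` {Suc a..b}" using W'sub by blast
        then obtain j where j: "j \<in> {Suc a..b}" "x = p j" by (rule imageE) simp
        then have "c \<le> j" using \<open>x \<in> W'\<close> by (intro cmin) simp_all
        then have "j \<in> {c..b}" using j(1) by simp
        then show "x \<in> p ` {c..b}" using j(2) by (rule rev_image_eqI)
      qed
      obtain E' where E': "spanning_tree W' E'" "(\<Sum>(x,y)\<in>E'. tt x y) \<le> S c b"
      proof -
        have d1: "b - c < d" "b = c + (b - c)" using less.prems c by auto
        from less.IH[OF d1 W'sub2 W'ne] show ?thesis using that unfolding S_def by blast
      qed
      have pac: "p a \<noteq> p c" using c unfolding W'_def by auto
      have tac: "tt (p a) (p c) \<le> S a c"
        using path_le[OF hp htt htri, of c a "c - Suc a"] c pac unfolding S_def by simp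
      define e where "e = (min (p a) (p c), max (p a) (p c))"
      define E where "E = insert e E'"
      have finW: "finite W" using less.prems finite_subset by blast
      have finE': "finite E'"
        using E'(1) finW unfolding spanning_tree_def W'_def
        by (rule_tac finite_subset[of _ "W \<times> W"]) auto
      have eE': "e \<notin> E'"
        using E'(1) unfolding spanning_tree_def W'_def e_def by (auto simp: min_def max_def)
      have tte: "case_prod tt e = tt (p a) (p c)"
      proof -
        have "p c < n" "p a < n" using spec[OF hp, of a] spec[OF hp, of c] by blast+
        then have "tt (p c) (p a) = tt (p a) (p c)" using htt[rule_format, of "p c" "p a"] pac by argo
        then show ?thesis unfolding e_def by (simp add: min_def max_def)
      qed
      have wt: "(\<Sum>(x,y)\<in>E. tt x y) \<le> S a b"
      proof -
        have "(\<Sum>(x,y)\<in>E. tt x y) = tt (p a) (p c) + (\<Sum>(x,y)\<in>E'. tt x y)"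
          unfolding E_def using finE' eE' tte by simp
        also have "\<dots> \<le> S a c + S c b" using tac E'(2) by linarith
        also have "\<dots> = S a b" using c by (intro Ssplit[symmetric]) auto
        finally show ?thesis .
      qed
      have cardW: "card W = Suc (card W')"
        using card_Suc_Diff1[OF finW pa(1)] unfolding W'_def by simp
      have cardW': "card W' \<ge> 1" using W'ne finW unfolding W'_def
        by (simp add: Suc_leI card_gt_0_iff)
      have st: "spanning_tree W E"
        unfolding spanning_tree_def
      proof (intro conjI ballI)
        show "E \<subseteq> {(a, b). a \<in> W \<and> b \<in> W \<and> a < b}"
          using E'(1) pa(1) c(3) pac unfolding spanning_tree_def E_def e_def W'_def
          by (auto simp: min_def max_def)
        show "card E = card W - 1"
          using E'(1) finE' eE' cardW cardW' unfolding spanning_tree_def E_def by simp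
        fix u v assume u: "u \<in> W" and v: "v \<in> W"
        let ?R = "E \<union> E\<inverse>"
        have mono: "(E' \<union> E'\<inverse>)\<^sup>* \<subseteq> ?R\<^sup>*"
          by (rule rtrancl_mono) (auto simp: E_def)
        have R': "x \<in> W' \<Longrightarrow> y \<in> W' \<Longrightarrow> (x, y) \<in> ?R\<^sup>*" for x y
          using E'(1) mono unfolding spanning_tree_def by blast
        have e1: "(p a, p c) \<in> ?R" "(p c, p a) \<in> ?R"
          unfolding E_def e_def by (auto simp: min_def max_def)
        have toa: "x \<in> W' \<Longrightarrow> (x, p a) \<in> ?R\<^sup>*" for x
          using R'[of x "p c"] c(3) e1(2) by (meson rtrancl.rtrancl_into_rtrancl)
        have froma: "x \<in> W' \<Longrightarrow> (p a, x) \<in> ?R\<^sup>*" for x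
          using R'[of "p c" x] c(3) e1(1) by (meson converse_rtrancl_into_rtrancl)
        show "(u, v) \<in> ?R\<^sup>*"
          using u v R' toa froma unfolding W'_def by (cases "u = p a"; cases "v = p a") auto
      qed
      show ?thesis using st wt unfolding S_def by blast
    qed
  qed
qed


lemma mst_le:
  assumes "finite W" "spanning_tree W E"
  shows "MST tt W \<le> (\<Sum>(x,y)\<in>E. tt x y)"
proof -
  have "{E. spanning_tree W E} \<subseteq> Pow (W \<times> W)" unfolding spanning_tree_def by auto
  then have fin: "finite {E. spanning_tree W E}" using assms(1) finite_subset by blast
  have eq: "{(\<Sum>(a,b)\<in>E. tt a b) | E. spanning_tree W E} = (\<lambda>E. \<Sum>(a,b)\<in>E. tt a b) ` {E. spanning_tree W E}"
    by auto
  show ?thesis unfolding MST_def eq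
    by (rule Min_le) (use fin assms(2) in auto)
qed

lemma lc_props:
  assumes "\<tau> \<ge> 0"
  shows "last_cut tt p i \<tau> \<le> \<tau>" "y < last_cut tt p i \<tau> \<Longrightarrow> y \<ge> 0 \<Longrightarrow> \<exists>k. p k = i \<and> y < arrival tt p k \<and> arrival tt p k \<le> \<tau>"
proof -
  define A where "A = {arrival tt p k | k. arrival tt p k \<le> \<tau> \<and> p k = i} \<union> {0}"
  have ne: "A \<noteq> {}" unfolding A_def by auto
  have bd: "\<And>x. x \<in> A \<Longrightarrow> x \<le> \<tau>" unfolding A_def using assms by auto
  show "last_cut tt p i \<tau> \<le> \<tau>" unfolding last_cut_def A_def[symmetric]
    by (rule cSup_least[OF ne bd])
  assume y: "y < last_cut tt p i \<tau>" "y \<ge> 0"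
  then obtain x where x: "x \<in> A" "y < x" using less_cSupE[OF _ ne] unfolding last_cut_def A_def[symmetric] by blast
  then have "x \<noteq> 0" using y by auto
  then show "\<exists>k. p k = i \<and> y < arrival tt p k \<and> arrival tt p k \<le> \<tau>" using x unfolding A_def by auto
qed

theorem lemma4:
  fixes n :: nat and h :: "nat \<Rightarrow> real" and tt :: "nat \<Rightarrow> nat \<Rightarrow> real"
    and p :: "nat \<Rightarrow> nat" and W :: "nat set"
  assumes "bgt_instance n h tt"
    and "schedule n p"
    and "W \<subseteq> {..<n}" and "W \<noteq> {}"
  shows "MH n h tt p \<ge> ereal (h_min h W * MST tt W)"
proof (rule ccontr)
  assume "\<not> ?thesis"
  then have lt: "MH n h tt p < ereal (h_min h W * MST tt W)" by simp
  have hpos: "\<forall>i<n. h i > 0"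
    and htt: "\<forall>i<n. \<forall>j<n. i \<noteq> j \<longrightarrow> tt i j > 0 \<and> tt i j = tt j i"
    and htri: "\<forall>i<n. \<forall>j<n. \<forall>k<n. i \<noteq> j \<and> j \<noteq> k \<and> i \<noteq> k \<longrightarrow> tt i k \<le> tt i j + tt j k"
    using assms(1) unfolding bgt_instance_def by auto
  have hp: "\<forall>j. p j < n \<and> p (Suc j) \<noteq> p j" using assms(2) unfolding schedule_def by auto
  have finW: "finite W" using assms(3) finite_subset by blast
  define c where "c = h_min h W"
  define M where "M = MST tt W"
  have cle: "\<And>i. i \<in> W \<Longrightarrow> c \<le> h i" unfolding c_def h_min_def using finW by auto
  have cpos: "c > 0" unfolding c_def h_min_def using finW assms(3,4) hpos
    by (subst Min_gr_iff) auto
  obtain X where X: "MH n h tt p < ereal X" "ereal X < ereal (c * M)"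
    using ereal_dense2[OF lt] unfolding c_def M_def by blast
  have hb: "height h tt p i \<tau> \<le> X" if "\<tau> \<ge> 0" "i < n" for i \<tau>
  proof -
    have "ereal (height h tt p i \<tau>) \<le> (SUP i\<in>{..<n}. ereal (height h tt p i \<tau>))"
      by (rule SUP_upper) (use that in auto)
    also have "\<dots> \<le> MH n h tt p" unfolding MH_def
      by (rule SUP_upper[where f = "\<lambda>\<tau>. SUP i\<in>{..<n}. ereal (height h tt p i \<tau>)"]) (use that in auto)
    finally have "ereal (height h tt p i \<tau>) < ereal X" using X(1) by (rule le_less_trans)
    then show ?thesis by simp
  qed
  define D where "D = X / c"
  define \<tau> where "\<tau> = max 0 D + 1"
  have \<tau>0: "\<tau> \<ge> 0" unfolding \<tau>_def by simp
  have key: "M < D + \<epsilon>" if eps: "0 < \<epsilon>" "\<epsilon> \<le> 1" for \<epsilon>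
  proof -
    have ex: "\<exists>k. p k = i \<and> \<tau> - D - \<epsilon> < arrival tt p k \<and> arrival tt p k \<le> \<tau>" if i: "i \<in> W" for i
    proof -
      let ?lc = "last_cut tt p i \<tau>"
      have lc: "?lc \<le> \<tau>" using lc_props(1)[OF \<tau>0] .
      have "h i * (\<tau> - ?lc) \<le> X" using hb[OF \<tau>0, of i] i assms(3) unfolding height_def by auto
      moreover have "c * (\<tau> - ?lc) \<le> h i * (\<tau> - ?lc)"
        using cle[OF i] lc by (intro mult_right_mono) auto
      ultimately have "c * (\<tau> - ?lc) \<le> X" by linarith
      then have "\<tau> - ?lc \<le> D" unfolding D_def using cpos by (simp add: pos_le_divide_eq mult.commute)
      then have "\<tau> - D - \<epsilon> < ?lc" using eps by linarith
      moreover have "\<tau> - D - \<epsilon> \<ge> 0" unfolding \<tau>_def using eps by auto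
      ultimately show ?thesis using lc_props(2)[OF \<tau>0] by blast
    qed
    then obtain K where K: "\<And>i. i \<in> W \<Longrightarrow> p (K i) = i \<and> \<tau> - D - \<epsilon> < arrival tt p (K i) \<and> arrival tt p (K i) \<le> \<tau>"
    proof -
      from ex have "\<forall>i\<in>W. \<exists>k. p k = i \<and> \<tau> - D - \<epsilon> < arrival tt p k \<and> arrival tt p k \<le> \<tau>" by blast
      from bchoice[OF this] obtain K0 where "\<forall>i\<in>W. p (K0 i) = i \<and> \<tau> - D - \<epsilon> < arrival tt p (K0 i) \<and> arrival tt p (K0 i) \<le> \<tau>" by blast
      then show ?thesis by (intro that[of K0]) simp
    qed
    define a where "a = Min (K ` W)"
    define b where "b = Max (K ` W)"
    have finK: "finite (K ` W)" using finW by simp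
    have neK: "K ` W \<noteq> {}" using assms(4) by simp
    have aK: "a \<in> K ` W" unfolding a_def using finK neK by (rule Min_in)
    have bK: "b \<in> K ` W" unfolding b_def using finK neK by (rule Max_in)
    have ab: "a \<le> b" unfolding a_def b_def using finK neK aK by (simp add: Max_ge a_def)
    have Wsub: "W \<subseteq> p ` {a..b}"
    proof
      fix i assume i: "i \<in> W"
      have "a \<le> K i" "K i \<le> b" unfolding a_def b_def using finK i by auto
      then show "i \<in> p ` {a..b}" using K[OF i] by (intro image_eqI[of i p "K i"]) auto
    qed
    obtain E where E: "spanning_tree W E" "(\<Sum>(x,y)\<in>E. tt x y) \<le> (\<Sum>j\<in>{a..<b}. tt (p j) (p (Suc j)))"
      using tree_ex[OF hp htt htri, of b a "b - a" W] ab Wsub assms(4) by auto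
    have arr: "arrival tt p b = arrival tt p a + (\<Sum>j\<in>{a..<b}. tt (p j) (p (Suc j)))"
      unfolding arrival_def using ab
      by (simp add: atLeast0LessThan[symmetric] sum.atLeastLessThan_concat)
    have "arrival tt p b \<le> \<tau>" "\<tau> - D - \<epsilon> < arrival tt p a" using K aK bK by auto
    then have "(\<Sum>j\<in>{a..<b}. tt (p j) (p (Suc j))) < D + \<epsilon>" using arr by linarith
    moreover have "M \<le> (\<Sum>(x,y)\<in>E. tt x y)" unfolding M_def by (rule mst_le[OF finW E(1)])
    ultimately show ?thesis using E(2) by linarith
  qed
  have "M \<le> D"
  proof (rule ccontr)
    assume "\<not> M \<le> D"
    then have "0 < min 1 ((M - D) / 2)" by simp
    moreover have "min 1 ((M - D) / 2) \<le> 1" by simp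
    ultimately have "M < D + min 1 ((M - D) / 2)" by (rule key)
    moreover have "min 1 ((M - D) / 2) \<le> (M - D) / 2" by (rule min.cobounded2)
    ultimately have "M - D < (M - D) / 2" by linarith
    moreover have "0 < M - D" using \<open>\<not> M \<le> D\<close> by linarith
    ultimately show False using half_gt_zero[of "M - D"] field_sum_of_halves[of "M - D"] by linarith
  qed
  then have "c * M \<le> c * D" using cpos by simp
  also have "c * D = X" unfolding D_def using cpos by simp
  finally show False using X(2) by simp
qed

end
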